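(* As $s\to 1^+$ (real $s$), $$\lim_{s\to1^+}(s-1)\prod_{p\equiv 1,2,4 \pmod 7}\left(1-\frac{1}{p^s}\right)^{-2}=\frac{3\sqrt7}{4\pi}\prod_{p\equiv 1,2,4\pmod 7}\left(1-\frac{1}{p^2}\right)^{-1},$$ where the products are over primes $p$ congruent to $1$, $2$ or $4$ modulo $7$. *)

theory Defs
  imports "HOL-Analysis.Analysis"
begin

end

theory Submission
  imports Defs
begin


lemma rGamma_refl_real: "rGamma (y::real) * rGamma (1-y) = sin(pi*y)/pi"
proof -
  have "rGamma (complex_of_real y) * rGamma (1 - complex_of_real y) = sin (of_real pi * of_real y) / of_real pi"
    by (rule rGamma_reflection_complex)
  also have "1 - complex_of_real y = of_real (1-y)" by simp
  finally have "complex_of_real (rGamma y * rGamma (1-y)) = complex_of_real (sin(pi*y)/pi)"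
    by (simp only: rGamma_complex_of_real of_real_mult sin_of_real of_real_divide flip: of_real_mult)
  thus ?thesis by (simp only: of_real_eq_iff)
qed

lemma digamma_refl:
  fixes x :: real assumes "0<x" "x<1"
  shows "Digamma (1-x) - Digamma x = pi * cos(pi*x)/sin(pi*x)"
proof -
  have nx: "x \<notin> \<int>\<^sub>\<le>\<^sub>0" "1 - x \<notin> \<int>\<^sub>\<le>\<^sub>0" using assms by (auto elim!: nonpos_Ints_cases)
  have d1: "((\<lambda>y. rGamma y * rGamma (1-y)) has_real_derivative
     (-rGamma x * Digamma x * rGamma(1-x) + rGamma x * (rGamma(1-x)*Digamma(1-x)))) (at x)"
    using nx by (auto intro!: derivative_eq_intros)
  have d2: "((\<lambda>y. sin(pi*y)/pi) has_real_derivative cos(pi*x)) (at x)"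
    by (auto intro!: derivative_eq_intros)
  have eq: "(\<lambda>y. rGamma y * rGamma (1-y)) = (\<lambda>y. sin(pi*y)/pi)" using rGamma_refl_real by auto
  have "-rGamma x * Digamma x * rGamma(1-x) + rGamma x * (rGamma(1-x)*Digamma(1-x)) = cos(pi*x)"
    using DERIV_unique[OF d1[unfolded eq] d2] .
  hence "(rGamma x * rGamma(1-x)) * (Digamma (1-x) - Digamma x) = cos(pi*x)" by (simp add: algebra_simps)
  hence *: "sin(pi*x)/pi * (Digamma (1-x) - Digamma x) = cos(pi*x)" by (simp add: rGamma_refl_real)
  have "sin(pi*x) > 0" using assms by (intro sin_gt_zero) auto
  with * show ?thesis by (simp add: field_simps)
qed

lemma D_digamma:
  fixes x :: real assumes "0<x" "x<1"
  shows "(\<lambda>k. 1/(real k + x) - 1/(real k + (1-x))) sums (pi * cos(pi*x)/sin(pi*x))"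
proof -
  have s1: "summable (\<lambda>n. inverse (real (Suc n)) - inverse (x + real n))" using assms by (intro summable_Digamma) auto
  have s2: "summable (\<lambda>n. inverse (real (Suc n)) - inverse ((1-x) + real n))" using assms by (intro summable_Digamma) auto
  have "(\<lambda>n. (inverse (real (Suc n)) - inverse ((1-x) + real n)) - (inverse (real (Suc n)) - inverse (x + real n)))
     sums ((\<Sum>n. inverse (real (Suc n)) - inverse ((1-x) + real n)) - (\<Sum>n. inverse (real (Suc n)) - inverse (x + real n)))"
    by (intro sums_diff summable_sums s1 s2)
  also have "(\<Sum>n. inverse (real (Suc n)) - inverse ((1-x) + real n)) - (\<Sum>n. inverse (real (Suc n)) - inverse (x + real n))
     = Digamma (1-x) - Digamma x" by (simp add: Digamma_def)
  also have "\<dots> = pi * cos(pi*x)/sin(pi*x)" using digamma_refl assms by simp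
  finally show ?thesis by (simp add: divide_inverse add.commute)
qed

lemma cos_pi7_cubic: "8*cos(pi/7)^3 - 4*cos(pi/7)^2 - 4*cos(pi/7) + 1 = 0"
proof -
  define c where "c = cos(pi/7)"
  have "cos (4*(pi/7)) = - cos(3*(pi/7))"
  proof -
    have "4*(pi/7) = pi - 3*(pi/7)" by simp
    hence "cos (4*(pi/7)) = cos (pi - 3*(pi/7))" by (simp only:)
    thus ?thesis by (simp only: cos_diff cos_pi sin_pi)
  qed
  moreover have "cos (4*(pi/7)) = 2*(2*c^2-1)^2 - 1"
    using cos_double_cos[of "2*(pi/7)"] cos_double_cos[of "pi/7"] by (simp add: c_def mult.assoc)
  moreover have "cos(3*(pi/7)) = 4*c^3 - 3*c" using cos_treble_cos[of "pi/7"] by (simp add: c_def)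
  ultimately have "(c+1)*(8*c^3 - 4*c^2 - 4*c + 1) = 0" by algebra
  moreover have "c > 0" unfolding c_def by (intro cos_gt_zero_pi; insert pi_gt_zero; linarith)
  ultimately show ?thesis by (simp add: c_def)
qed



lemma cot_id: "cos(pi/7)/sin(pi/7) + cos(2 * pi/7)/sin(2 * pi/7) - cos(3 * pi/7)/sin(3 * pi/7) = sqrt 7"
proof -
  define c where "c = cos(pi/7)"
  define s where "s = sin(pi/7)"
  have s2: "sin(2 * pi/7) = 2 * s * c" using sin_double[of "pi/7"] by (simp add: s_def c_def)
  have c2: "cos(2 * pi/7) = 2 * c^2-1" using cos_double_cos[of "pi/7"] by (simp add: c_def)
  have "sin(3 * pi/7) = sin(2 * (pi/7) + pi/7)" by (simp add: field_simps)
  also have "\<dots> = 2 * s * c * c + (2 * c^2-1) * s" unfolding sin_add using s2 c2 by (simp add: s_def c_def)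
  finally have s3: "sin(3 * pi/7) = s * (4 * c^2-1)" by (simp add: algebra_simps power2_eq_square)
  have c3: "cos(3 * pi/7) = 4 * c^3-3 * c" using cos_treble_cos[of "pi/7"] by (simp add: c_def)
  have ss: "s^2 = 1 - c^2" unfolding s_def c_def by (simp add: sin_squared_eq)
  have spos: "s > 0" unfolding s_def by (intro sin_gt_zero; insert pi_gt_zero; simp)
  have chalf: "c > 1/2"
  proof -
    have "cos (pi/3) < cos(pi/7)" using pi_gt_zero by (subst cos_mono_less_eq) auto
    thus ?thesis by (simp add: c_def cos_60)
  qed
  have cub: "8 * c^3 - 4 * c^2 - 4 * c + 1 = 0" using cos_pi7_cubic by (simp add: c_def)
  have d: "4 * c^2 - 1 > 0"
  proof -
    have "c^2 > (1/2)^2" using chalf by (intro power_strict_mono) auto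
    thus ?thesis by (simp add: power2_eq_square)
  qed
  define S where "S = cos(pi/7)/sin(pi/7) + cos(2 * pi/7)/sin(2 * pi/7) - cos(3 * pi/7)/sin(3 * pi/7)"
  have S: "S = (8 * c^4 - 2 * c^2 + 1)/(2 * c * (4 * c^2-1) * s)"
    unfolding S_def s2 c2 s3 c3 using spos chalf d
    by (simp add: c_def[symmetric] s_def[symmetric] field_simps) (simp add: algebra_simps power2_eq_square power3_eq_cube power4_eq_xxxx eval_nat_numeral)
  have num: "8 * c^4 - 2 * c^2 + 1 > 0"
  proof -
    have "8 * c^4 - 2 * c^2 + 1 = 7 * c^4 + (c^2-1)^2" by (simp add: algebra_simps power2_eq_square power4_eq_xxxx)
    also have "\<dots> > 0" using chalf by (intro add_pos_nonneg) auto
    finally show ?thesis .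
  qed
  have Spos: "S > 0" unfolding S using num chalf d spos by (intro divide_pos_pos mult_pos_pos) auto
  have key: "(8 * c^4 - 2 * c^2 + 1)^2 = 7 * (2 * c * (4 * c^2-1))^2 * (1 - c^2)"
    using cub by algebra
  have "S^2 = (8 * c^4 - 2 * c^2 + 1)^2/((2 * c * (4 * c^2-1))^2 * s^2)" unfolding S by (simp add: power_divide power_mult_distrib)
  also have "\<dots> = 7 * ((2 * c * (4 * c^2-1))^2 * s^2) / ((2 * c * (4 * c^2-1))^2 * s^2)"
    unfolding key ss by (simp add: mult.assoc)
  also have "\<dots> = 7" using chalf d spos by simp
  finally have "sqrt 7 = S" using Spos by (intro real_sqrt_unique) auto
  thus ?thesis unfolding S_def by simp
qed



definition blk :: "real \<Rightarrow> nat \<Rightarrow> real" where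
  "blk s k = 1 / real (7 * k + 1) powr s + 1 / real (7 * k + 2) powr s - 1 / real (7 * k + 3) powr s
           + 1 / real (7 * k + 4) powr s - 1 / real (7 * k + 5) powr s - 1 / real (7 * k + 6) powr s"

lemma blk1_sums: "blk 1 sums (pi / sqrt 7)"
proof -
  have D1: "(\<lambda>k. 1/(real k + 1/7) - 1/(real k + (1-1/7))) sums (pi * cos(pi/7)/sin(pi/7))"
    using D_digamma[of "1/7"] by simp
  have D2: "(\<lambda>k. 1/(real k + 2/7) - 1/(real k + (1-2/7))) sums (pi * cos(2 * pi/7)/sin(2 * pi/7))"
    using D_digamma[of "2/7"] by (simp add: mult.commute)
  have D3: "(\<lambda>k. 1/(real k + 3/7) - 1/(real k + (1-3/7))) sums (pi * cos(3 * pi/7)/sin(3 * pi/7))"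
    using D_digamma[of "3/7"] by (simp add: mult.commute)
  have "(\<lambda>k. (1/7) * (((1/(real k + 1/7) - 1/(real k + (1-1/7))) + (1/(real k + 2/7) - 1/(real k + (1-2/7))))
       - (1/(real k + 3/7) - 1/(real k + (1-3/7)))))
     sums ((1/7) * ((pi * cos(pi/7)/sin(pi/7) + pi * cos(2 * pi/7)/sin(2 * pi/7)) - pi * cos(3 * pi/7)/sin(3 * pi/7)))"
    by (intro sums_mult sums_add sums_diff D1 D2 D3)
  also have "(1/7) * ((pi * cos(pi/7)/sin(pi/7) + pi * cos(2 * pi/7)/sin(2 * pi/7)) - pi * cos(3 * pi/7)/sin(3 * pi/7))
       = pi / 7 * (cos(pi/7)/sin(pi/7) + cos(2 * pi/7)/sin(2 * pi/7) - cos(3 * pi/7)/sin(3 * pi/7))"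
    by (simp add: algebra_simps)
  also have "\<dots> = pi / 7 * sqrt 7" by (simp only: cot_id)
  also have "pi / 7 * sqrt 7 = pi / sqrt 7"
  proof -
    have "sqrt 7 * sqrt 7 = (7::real)" by simp
    thus ?thesis by (simp add: field_simps)
  qed
  finally have *: "(\<lambda>k. (1/7) * (((1/(real k + 1/7) - 1/(real k + (1-1/7))) + (1/(real k + 2/7) - 1/(real k + (1-2/7))))
       - (1/(real k + 3/7) - 1/(real k + (1-3/7))))) sums (pi / sqrt 7)" .
  show ?thesis
  proof (rule sums_cong[THEN iffD1, OF _ *])
    fix k
    show "(1/7) * (((1/(real k + 1/7) - 1/(real k + (1-1/7))) + (1/(real k + 2/7) - 1/(real k + (1-2/7))))
       - (1/(real k + 3/7) - 1/(real k + (1-3/7)))) = blk 1 k"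
    proof -
      have e: "1/(real k + a/7) - 1/(real k + (1-a/7)) = 7 * (1/real(7 * k + nat a) - 1/real(7 * k + (7 - nat a)))"
        if "a \<in> {1,2,3}" for a :: int
        using that by (auto simp: field_simps)
      show ?thesis unfolding blk_def using e[of 1] e[of 2] e[of 3] by (simp add: algebra_simps)
    qed
  qed
qed



lemma cont_series:
  fixes f :: "nat \<Rightarrow> real \<Rightarrow> real"
  assumes "\<And>n x. x \<in> A \<Longrightarrow> \<bar>f n x\<bar> \<le> M n" "summable M" "\<And>n. continuous_on A (f n)"
  shows "continuous_on A (\<lambda>x. \<Sum>n. f n x)"
proof (rule uniform_limit_theorem[where F = sequentially])
  show "uniform_limit A (\<lambda>n x. \<Sum>i<n. f i x) (\<lambda>x. \<Sum>n. f n x) sequentially"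
    using assms by (intro Weierstrass_m_test) auto
  show "\<forall>\<^sub>F n in sequentially. continuous_on A (\<lambda>x. \<Sum>i<n. f i x)"
    using assms(3) by (intro always_eventually allI continuous_on_sum) auto
qed auto

lemma powr_diff_bound:
  fixes x d s :: real
  assumes "1 \<le> x" "0 \<le> d" "1 \<le> s" "s \<le> 2"
  shows "0 \<le> 1/x powr s - 1/(x+d) powr s" "1/x powr s - 1/(x+d) powr s \<le> 2*d/x^2"
proof -
  have xp: "x > 0" using assms by simp
  have mono: "x powr s \<le> (x+d) powr s" using assms by (intro powr_mono2) auto
  have xdp: "(x+d) powr s > 0" using xp assms by simp
  moreover have "x powr s > 0" using xp by simp
  ultimately have "1/(x+d) powr s \<le> 1/x powr s" using mono by (auto intro!: divide_left_mono mult_pos_pos)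
  thus "0 \<le> 1/x powr s - 1/(x+d) powr s" by simp
  have q: "(x/(x+d)) powr s = x powr s / (x+d) powr s" using assms by (simp add: powr_divide)
  have "ln ((x+d)/x) \<le> (x+d)/x - 1" using xp assms by (intro ln_le_minus_one) auto
  hence lnb: "ln (x/(x+d)) \<ge> - (d/x)" using xp assms by (simp add: ln_div field_simps)
  have "(x/(x+d)) powr s = exp (s * ln (x/(x+d)))" using xp assms by (simp add: powr_def)
  also have "\<dots> \<ge> 1 + s * ln (x/(x+d))" by (rule exp_ge_add_one_self)
  finally have "(x/(x+d)) powr s \<ge> 1 - s * (d/x)"
    using mult_left_mono[OF lnb, of s] assms by linarith
  hence A: "1 - x powr s / (x+d) powr s \<le> s * (d/x)" unfolding q by simp
  have "1/x powr s - 1/(x+d) powr s = (1/x powr s) * (1 - x powr s / (x+d) powr s)"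
    using xp by (simp add: field_simps)
  also have "\<dots> \<le> (1/x) * (2 * (d/x))"
  proof (rule mult_mono)
    have "x powr 1 \<le> x powr s" using assms by (intro powr_mono) auto
    thus "1/x powr s \<le> 1/x" using xp by (simp add: field_simps)
    have "s * (d/x) \<le> 2 * (d/x)" using assms xp by (intro mult_right_mono) auto
    thus "1 - x powr s / (x+d) powr s \<le> 2 * (d/x)" using A by linarith
  qed (use xp mono xdp in \<open>auto simp: divide_le_eq\<close>)
  also have "\<dots> = 2*d/x^2" by (simp add: power2_eq_square field_simps)
  finally show "1/x powr s - 1/(x+d) powr s \<le> 2*d/x^2" .
qed

lemma blk_bound:
  assumes "1 \<le> s" "s \<le> 2"
  shows "\<bar>blk s k\<bar> \<le> 30 / (real k + 1)^2"
proof -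
  define u where "u j = 1 / real (7 * k + j) powr s" for j :: nat
  define x where "x = real (7 * k + 1)"
  have x1: "x \<ge> 1" unfolding x_def by simp
  have ux: "u j = 1 / (x + real (j - 1)) powr s" if "j \<ge> 1" for j
    unfolding u_def x_def using that by (simp add: of_nat_diff)
  have b: "0 \<le> u a - u b \<and> u a - u b \<le> 2 * 5 / x^2" if "1 \<le> a" "a \<le> b" "b \<le> 6" for a b
  proof -
    have b1: "1 \<le> b" using that by simp
    have e: "x + real (b - 1) = (x + real (a - 1)) + real (b - a)" using that by (simp add: of_nat_diff)
    have "0 \<le> u a - u b \<and> u a - u b \<le> 2 * real (b - a)/(x + real (a - 1))^2"
      unfolding ux[OF that(1)] ux[OF b1] using that e powr_diff_bound[of "x + real (a - 1)" "real (b - a)" s] x1 assms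
      by auto
    moreover have "2 * real (b - a)/(x + real (a - 1))^2 \<le> 2 * 5 / x^2"
      using that x1 by (intro frac_le power_mono) auto
    ultimately show ?thesis by linarith
  qed
  have "blk s k = (u 1 - u 6) + (u 2 - u 5) - (u 3 - u 4)" unfolding blk_def u_def by simp
  hence "\<bar>blk s k\<bar> \<le> 3 * (2 * 5 / x^2)" using b[of 1 6] b[of 2 5] b[of 3 4] by auto
  also have "\<dots> = 30 / x^2" by simp
  also have "\<dots> \<le> 30 / (real k + 1)^2"
    unfolding x_def by (intro divide_left_mono power_mono mult_pos_pos) auto
  finally show ?thesis .
qed

lemma summable_inv_sq: "summable (\<lambda>k. 30 / (real k + 1)^2)"
  using summable_mult[OF sums_summable[OF inverse_squares_sums], of 30] by (simp add: add.commute)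

lemma G_cont: "continuous_on {1..2} (\<lambda>s. \<Sum>k. blk s k)"
proof (rule cont_series[OF _ summable_inv_sq])
  show "\<bar>blk s k\<bar> \<le> 30 / (real k + 1)^2" if "s \<in> {1..2}" for k s using that blk_bound by auto
  show "continuous_on {1..2} (\<lambda>s. blk s k)" for k
    unfolding blk_def by (intro continuous_intros) auto
qed

lemma G_tendsto: "((\<lambda>s. \<Sum>k. blk s k) \<longlongrightarrow> pi / sqrt 7) (at_right 1)"
proof -
  have "((\<lambda>s. \<Sum>k. blk s k) \<longlongrightarrow> (\<Sum>k. blk 1 k)) (at 1 within {1..2})"
    using G_cont unfolding continuous_on_def by auto
  hence "((\<lambda>s. \<Sum>k. blk s k) \<longlongrightarrow> (\<Sum>k. blk 1 k)) (at_right 1)"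
    by (simp add: at_within_Icc_at_right)
  thus ?thesis using sums_unique[OF blk1_sums] by simp
qed



lemma summable_inv_powr: "s > 1 \<Longrightarrow> summable (\<lambda>n. 1 / real n powr s)"
proof -
  assume s: "s > 1"
  have "summable (\<lambda>n. real n powr (-s))" using s by (subst summable_real_powr_iff) auto
  moreover have "real n powr (-s) = 1 / real n powr s" for n by (simp add: powr_minus_divide)
  ultimately show ?thesis by simp
qed

lemma abs_dir_le:
  fixes f :: "nat \<Rightarrow> real"
  assumes "\<And>n. \<bar>f n\<bar> \<le> 1"
  shows "\<bar>f n / real n powr s\<bar> \<le> 1 / real n powr s"
  using assms[of n] by (simp add: abs_divide divide_right_mono)

lemma summable_dir:
  fixes f :: "nat \<Rightarrow> real"
  assumes "\<And>n. \<bar>f n\<bar> \<le> 1" "s > 1"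
  shows "summable (\<lambda>n. f n / real n powr s)"
  by (rule summable_comparison_test[OF _ summable_inv_powr[OF assms(2)]])
     (use abs_dir_le[of f, OF assms(1)] in \<open>auto intro!: exI[of _ 0]\<close>)

lemma summable_filter:
  fixes a :: "nat \<Rightarrow> real"
  assumes "summable (\<lambda>n. \<bar>a n\<bar>)"
  shows "summable (\<lambda>n. if P n then a n else 0)"
  by (rule summable_comparison_test[OF _ assms]) auto

locale eul =
  fixes f :: "nat \<Rightarrow> real" and s :: real
  assumes mult: "\<And>m n. m > 0 \<Longrightarrow> n > 0 \<Longrightarrow> f (m * n) = f m * f n"
    and f1: "f 1 = 1" and bnd: "\<And>n. \<bar>f n\<bar> \<le> 1" and s: "s > 1"
begin

definition a where "a n = f n / real n powr s"
definition T where "T Q = (\<Sum>n. if (\<forall>q\<in>Q. \<not> q dvd n) then a n else 0)"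

lemma a0: "a 0 = 0" by (simp add: a_def)

lemma abs_summable_a: "summable (\<lambda>n. \<bar>a n\<bar>)"
  by (rule summable_comparison_test[OF _ summable_inv_powr[OF s]])
     (use abs_dir_le[of f, OF bnd] in \<open>auto simp: a_def intro!: exI[of _ 0]\<close>)

lemma summable_a: "summable a"
  using summable_dir[OF bnd s] by (simp add: a_def[abs_def])

lemma a_mult: "p > 0 \<Longrightarrow> a (p * m) = (f p / real p powr s) * a m"
proof (cases "m = 0")
  case True thus ?thesis by (simp add: a0)
next
  case False
  assume p: "p > 0"
  have "real (p * m) powr s = real p powr s * real m powr s" by (simp add: powr_mult)
  thus ?thesis using False p by (simp add: a_def mult)
qed

lemma T_step:
  assumes "prime p" "p \<notin> Q" "\<forall>q\<in>Q. prime q"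
  shows "T (insert p Q) = (1 - f p / real p powr s) * T Q"
proof -
  define h where "h n = (if (\<forall>q\<in>Q. \<not> q dvd n) then a n else 0)" for n
  have p0: "p > 0" using assms prime_gt_0_nat by auto
  have sh: "summable (\<lambda>n. \<bar>h n\<bar>)"
    by (rule summable_comparison_test[OF _ abs_summable_a]) (auto simp: h_def)
  hence sh': "summable h" using summable_rabs_cancel by blast
  have hpm: "h (p * m) = (f p / real p powr s) * h m" for m
  proof -
    have "(\<forall>q\<in>Q. \<not> q dvd p * m) \<longleftrightarrow> (\<forall>q\<in>Q. \<not> q dvd m)"
    proof -
      have "\<not> q dvd p" if "q \<in> Q" for q
        using that assms primes_dvd_imp_eq[of q p] by auto
      moreover have "q dvd p * m \<longleftrightarrow> q dvd p \<or> q dvd m" if "q \<in> Q" for q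
        using that assms by (intro prime_dvd_mult_iff) auto
      ultimately show ?thesis by auto
    qed
    thus ?thesis unfolding h_def using a_mult[OF p0] by simp
  qed
  have sm: "summable (\<lambda>m. h (p * m))" unfolding hpm by (intro summable_mult sh')
  have eqv: "(\<lambda>m. (\<lambda>n. if p dvd n then h n else 0) (p * m)) sums c \<longleftrightarrow> (\<lambda>n. if p dvd n then h n else 0) sums c" for c
    by (rule sums_mono_reindex) (use p0 in \<open>auto simp: strict_mono_def\<close>)
  have "(\<lambda>n. if p dvd n then h n else 0) sums (\<Sum>m. h (p * m))"
    using summable_sums[OF sm] eqv by simp
  hence "(\<Sum>n. if p dvd n then h n else 0) = (\<Sum>m. h (p * m))" by (simp add: sums_iff)
  also have "\<dots> = (\<Sum>m. (f p / real p powr s) * h m)" by (simp only: hpm)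
  also have "\<dots> = (f p / real p powr s) * T Q" by (simp only: suminf_mult[OF sh']) (simp add: h_def[abs_def] T_def)
  finally have S1: "(\<Sum>n. if p dvd n then h n else 0) = (f p / real p powr s) * T Q" .
  have "T (insert p Q) = (\<Sum>n. h n - (if p dvd n then h n else 0))"
    unfolding T_def h_def by (rule suminf_cong) auto
  also have "\<dots> = (\<Sum>n. h n) - (\<Sum>n. if p dvd n then h n else 0)"
    by (rule suminf_diff[symmetric]) (use sh' summable_filter[OF sh] in auto)
  also have "(\<Sum>n. h n) = T Q" by (simp add: h_def[abs_def] T_def)
  finally show ?thesis unfolding S1 by (simp add: algebra_simps)
qed

lemma T_prod:
  assumes "finite Q" "\<forall>q\<in>Q. prime q"
  shows "T Q = (\<Prod>q\<in>Q. (1 - f q / real q powr s)) * (\<Sum>n. a n)"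
  using assms
proof (induction Q rule: finite_induct)
  case empty thus ?case by (simp add: T_def)
next
  case (insert p Q)
  thus ?case by (simp add: T_step)
qed


lemma T_lim: "(\<lambda>N. T {p. prime p \<and> p \<le> N}) \<longlonglongrightarrow> 1"
proof -
  define t where "t N n = (if (\<forall>q\<in>{p. prime p \<and> p \<le> N}. \<not> q dvd n) then a n else 0)" for N n
  define d where "d n = (if n = 1 then a n else 0)" for n
  define e where "e N n = (if n > N then \<bar>a n\<bar> else 0)" for N n
  have a1: "a 1 = 1" using f1 by (simp add: a_def)
  have bound: "\<bar>t N n - d n\<bar> \<le> e N n" if "N \<ge> 1" for N n
  proof -
    consider "n = 0" | "n = 1" | "2 \<le> n" "n \<le> N" | "n > N" by linarith
    thus ?thesis
    proof cases
      case 1 thus ?thesis by (simp add: t_def d_def e_def a0)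
    next
      case 2 thus ?thesis using that by (simp add: t_def d_def e_def)
    next
      case 3
      then obtain q where q: "prime q" "q dvd n" using prime_factor_nat[of n] by auto
      have "q \<le> n" using q 3 by (intro dvd_imp_le) auto
      hence "t N n = 0" using q 3 unfolding t_def by auto
      thus ?thesis using 3 by (simp add: d_def e_def)
    next
      case 4 thus ?thesis using that by (simp add: t_def d_def e_def)
    qed
  qed
  have sa: "summable (\<lambda>n. \<bar>a n\<bar>)" by (rule abs_summable_a)
  have st: "summable (t N)" for N unfolding t_def[abs_def] by (rule summable_filter[OF sa])
  have sd: "d sums 1" unfolding d_def using sums_single[of 1 a] a1 by simp
  have se: "summable (e N)" for N unfolding e_def[abs_def]
    by (rule summable_comparison_test[OF _ sa]) auto
  have eN: "(\<Sum>n. e N n) = (\<Sum>n. \<bar>a n\<bar>) - (\<Sum>i\<le>N. \<bar>a i\<bar>)" for N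
  proof -
    have "(\<Sum>n. if n \<le> N then \<bar>a n\<bar> else 0) = (\<Sum>i\<le>N. \<bar>a i\<bar>)"
      by (subst suminf_finite[of "{..N}"]) auto
    moreover have "(\<Sum>n. \<bar>a n\<bar>) - (\<Sum>n. if n \<le> N then \<bar>a n\<bar> else 0) = (\<Sum>n. e N n)"
      by (subst suminf_diff[OF sa]) (auto simp: e_def intro!: summable_filter[OF sa] suminf_cong)
    ultimately show ?thesis by simp
  qed
  have elim: "(\<lambda>N. \<Sum>n. e N n) \<longlonglongrightarrow> 0"
  proof -
    have "(\<lambda>N. (\<Sum>n. \<bar>a n\<bar>) - (\<Sum>i\<le>N. \<bar>a i\<bar>)) \<longlonglongrightarrow> (\<Sum>n. \<bar>a n\<bar>) - (\<Sum>n. \<bar>a n\<bar>)"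
      by (intro tendsto_diff tendsto_const summable_LIMSEQ' sa)
    thus ?thesis by (simp add: eN)
  qed
  have "(\<lambda>N. T {p. prime p \<and> p \<le> N} - 1) \<longlonglongrightarrow> 0"
  proof (rule Lim_null_comparison[OF _ elim])
    show "\<forall>\<^sub>F N in sequentially. norm (T {p. prime p \<and> p \<le> N} - 1) \<le> (\<Sum>n. e N n)"
      using eventually_ge_at_top[of 1]
    proof eventually_elim
      case (elim N)
      have eq: "T {p. prime p \<and> p \<le> N} - 1 = (\<Sum>n. t N n - d n)"
        using suminf_diff[OF st sums_summable[OF sd]] sums_unique[OF sd]
        by (simp add: T_def t_def[abs_def])
      have sabs: "summable (\<lambda>n. \<bar>t N n - d n\<bar>)"
        by (rule summable_comparison_test[OF _ se]) (use bound elim in auto)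
      have "\<bar>\<Sum>n. t N n - d n\<bar> \<le> (\<Sum>n. \<bar>t N n - d n\<bar>)"
        by (rule summable_rabs, rule summable_comparison_test[OF _ se]) (use bound elim in auto)
      also have "\<dots> \<le> (\<Sum>n. e N n)"
        by (rule suminf_le) (use bound elim se sabs in auto)
      finally show ?case using eq by simp
    qed
  qed
  hence "(\<lambda>N. (T {p. prime p \<and> p \<le> N} - 1) + 1) \<longlonglongrightarrow> 0 + 1" by (intro tendsto_add tendsto_const)
  thus ?thesis by simp
qed

lemma fac_nz: "prime q \<Longrightarrow> 1 - f q / real q powr s \<noteq> 0"
proof
  assume q: "prime q" and eq: "1 - f q / real q powr s = 0"
  have "real q > 1" using prime_gt_1_nat[OF q] by simp
  hence "1 powr s < real q powr s" using s by (intro powr_less_mono2) auto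
  hence "real q powr s > 1" by simp
  moreover have pos: "real q powr s > 0" using \<open>real q > 1\<close> by simp
  ultimately have "\<bar>f q\<bar> / real q powr s < 1" using bnd[of q] by (simp add: divide_less_eq)
  moreover have "f q / real q powr s = 1" using eq by linarith
  moreover have "\<bar>f q / real q powr s\<bar> = \<bar>f q\<bar> / real q powr s" using pos by (simp add: abs_divide)
  ultimately show False by simp
qed

lemma euler: "(\<lambda>p. if prime p then inverse (1 - f p / real p powr s) else 1) has_prod (\<Sum>n. f n / real n powr s)"
proof -
  define Z where "Z = (\<Sum>n. a n)"
  have Za: "(\<Sum>n. f n / real n powr s) = Z" by (simp add: Z_def a_def[abs_def])
  define Pi where "Pi N = (\<Prod>q\<in>{p. prime p \<and> p \<le> N}. (1 - f q / real q powr s))" for N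
  have fin: "finite {p. prime p \<and> p \<le> N}" for N :: nat by auto
  have TP: "T {p. prime p \<and> p \<le> N} = Pi N * Z" for N
    unfolding Pi_def Z_def by (rule T_prod) (auto)
  have Pinz: "Pi N \<noteq> 0" for N unfolding Pi_def using fac_nz by (auto simp: prod_zero_iff[OF fin])
  have Znz: "Z \<noteq> 0"
  proof
    assume "Z = 0"
    hence "(\<lambda>N. T {p. prime p \<and> p \<le> N}) \<longlonglongrightarrow> 0" by (simp add: TP)
    from LIMSEQ_unique[OF this T_lim] show False by simp
  qed
  have part: "(\<Prod>i\<le>N. (if prime i then inverse (1 - f i / real i powr s) else 1)) = Z / T {p. prime p \<and> p \<le> N}" for N
  proof -
    have "(\<Prod>i\<le>N. (if prime i then inverse (1 - f i / real i powr s) else 1))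
        = (\<Prod>i\<in>{i\<in>{..N}. prime i}. inverse (1 - f i / real i powr s))"
      by (rule prod.inter_filter[symmetric]) auto
    also have "{i\<in>{..N}. prime i} = {p. prime p \<and> p \<le> N}" by auto
    also have "(\<Prod>i\<in>{p. prime p \<and> p \<le> N}. inverse (1 - f i / real i powr s)) = inverse (Pi N)"
      unfolding Pi_def using prod_inversef[of "\<lambda>i. 1 - f i / real i powr s"] by (simp add: o_def)
    also have "\<dots> = Z / T {p. prime p \<and> p \<le> N}" using Pinz Znz by (simp add: TP field_simps)
    finally show ?thesis .
  qed
  have "(\<lambda>N. Z / T {p. prime p \<and> p \<le> N}) \<longlonglongrightarrow> Z / 1"
    by (intro tendsto_divide tendsto_const T_lim) auto
  hence lim: "(\<lambda>N. \<Prod>i\<le>N. (if prime i then inverse (1 - f i / real i powr s) else 1)) \<longlonglongrightarrow> Z"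
    by (simp add: part)
  define F where "F p = (if prime p then inverse (1 - f p / real p powr s) else 1)" for p
  have "raw_has_prod F 0 Z" unfolding raw_has_prod_def using lim Znz by (simp add: F_def)
  hence "F has_prod Z" unfolding has_prod_def by blast
  thus ?thesis unfolding Za F_def[abs_def] .
qed

end


lemma tele_bounds:
  fixes x s :: real
  assumes x: "x \<ge> 1" and s: "s > 1"
  shows "(s-1)/(x+1) powr s \<le> x powr (1-s) - (x+1) powr (1-s)"
    and "x powr (1-s) - (x+1) powr (1-s) \<le> (s-1)/x powr s"
proof -
  define t where "t = s - 1"
  have t: "t > 0" using s by (simp add: t_def)
  define A where "A = x powr t"
  define B where "B = (x+1) powr t"
  have A: "A > 0" and B: "B > 0" using x by (auto simp: A_def B_def)
  have ms: "1 - s = - t" by (simp add: t_def)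
  have e1: "x powr (1-s) = 1/A" unfolding A_def ms by (rule powr_minus_divide)
  have e2: "(x+1) powr (1-s) = 1/B" unfolding B_def ms by (rule powr_minus_divide)
  have e3: "x powr s = x * A"
  proof -
    have "x powr s = x powr (1 + t)" by (simp add: t_def)
    also have "\<dots> = x powr 1 * x powr t" by (rule powr_add)
    finally show ?thesis using x by (simp add: A_def)
  qed
  have e4: "(x+1) powr s = (x+1) * B"
  proof -
    have "(x+1) powr s = (x+1) powr (1 + t)" by (simp add: t_def)
    also have "\<dots> = (x+1) powr 1 * (x+1) powr t" by (rule powr_add)
    finally show ?thesis using x by (simp add: B_def)
  qed
  have AB: "A / B = (x/(x+1)) powr t" unfolding A_def B_def using x by (simp add: powr_divide)
  have BA: "B / A = ((x+1)/x) powr t" unfolding A_def B_def using x by (simp add: powr_divide)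
  have l1: "ln (x/(x+1)) \<le> x/(x+1) - 1" using x by (intro ln_le_minus_one) auto
  have l2: "ln ((x+1)/x) \<le> (x+1)/x - 1" using x by (intro ln_le_minus_one) auto
  have lnq: "ln ((x+1)/x) = - ln (x/(x+1))" using x by (simp add: ln_div)
  have "(x/(x+1)) powr t = exp (t * ln (x/(x+1)))" using x by (simp add: powr_def)
  also have "\<dots> \<ge> 1 + t * ln (x/(x+1))" by (rule exp_ge_add_one_self)
  finally have "A / B \<ge> 1 + t * ln (x/(x+1))" unfolding AB .
  moreover have "t * ln (x/(x+1)) \<ge> - t / x"
  proof -
    have "ln (x/(x+1)) \<ge> - (1/x)" using l2 lnq x by (simp add: field_simps)
    from mult_left_mono[OF this, of t] t show ?thesis by simp
  qed
  ultimately have ub: "A / B \<ge> 1 - t / x" by linarith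
  have "((x+1)/x) powr t = exp (t * ln ((x+1)/x))" using x by (simp add: powr_def)
  also have "\<dots> \<ge> 1 + t * ln ((x+1)/x)" by (rule exp_ge_add_one_self)
  finally have "B / A \<ge> 1 + t * ln ((x+1)/x)" unfolding BA .
  moreover have "t * ln ((x+1)/x) \<ge> t / (x+1)"
  proof -
    have "ln ((x+1)/x) \<ge> 1/(x+1)" using l1 lnq x by (simp add: field_simps)
    from mult_left_mono[OF this, of t] t show ?thesis by simp
  qed
  ultimately have lb: "B / A \<ge> 1 + t / (x+1)" by linarith
  have "1/A - 1/B = (1/A) * (1 - A/B)" using A B by (simp add: field_simps)
  also have "\<dots> \<le> (1/A) * (t/x)" using ub A by (intro mult_left_mono) auto
  also have "\<dots> = t/(x*A)" by simp
  finally show "x powr (1-s) - (x+1) powr (1-s) \<le> (s-1)/x powr s"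
    unfolding e1 e2 e3 t_def[symmetric] .
  have "(1/B) * (t/(x+1)) \<le> (1/B) * (B/A - 1)" using lb B by (intro mult_left_mono) auto
  also have "\<dots> = 1/A - 1/B" using A B by (simp add: field_simps)
  finally show "(s-1)/(x+1) powr s \<le> x powr (1-s) - (x+1) powr (1-s)"
    unfolding e1 e2 e4 t_def[symmetric] by (simp add: mult.commute)
qed

definition zeta :: "real \<Rightarrow> real" where "zeta s = (\<Sum>n. 1 / real n powr s)"

lemma zeta_bounds:
  assumes s: "s > 1"
  shows "1 \<le> (s-1) * zeta s" "(s-1) * zeta s \<le> s"
proof -
  define w where "w n = real (Suc n) powr (1-s)" for n
  have "w \<longlonglongrightarrow> 0" unfolding w_def using s
    by (intro tendsto_neg_powr filterlim_compose[OF filterlim_real_sequentially filterlim_Suc]) auto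
  hence tel: "(\<lambda>n. w n - w (Suc n)) sums 1" using telescope_sums'[of w 0] by (simp add: w_def)
  have sz: "summable (\<lambda>n. 1 / real n powr s)" using summable_inv_powr[OF s] .
  have sz1: "summable (\<lambda>n. 1 / real (Suc n) powr s)" by (rule summable_Suc_iff[of "\<lambda>n. 1 / real n powr s", THEN iffD2, OF sz])
  have sz2: "summable (\<lambda>n. 1 / real (Suc (Suc n)) powr s)" by (rule summable_Suc_iff[of "\<lambda>n. 1 / real (Suc n) powr s", THEN iffD2, OF sz1])
  have h0: "1 / real (0::nat) powr s = 0" by simp
  have h1: "1 / real (Suc 0) powr s = 1" by simp
  have z1: "zeta s = (\<Sum>n. 1 / real (Suc n) powr s)"
    unfolding zeta_def using suminf_split_head[OF sz] h0 by linarith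
  have z2: "(\<Sum>n. 1 / real (Suc n) powr s) = 1 + (\<Sum>n. 1 / real (Suc (Suc n)) powr s)"
    using suminf_split_head[OF sz1] h1 by linarith
  have "1 = (\<Sum>n. w n - w (Suc n))" using tel by (simp add: sums_iff)
  also have "\<dots> \<le> (\<Sum>n. (s-1) * (1 / real (Suc n) powr s))"
  proof (rule suminf_le)
    show "w n - w (Suc n) \<le> (s - 1) * (1 / real (Suc n) powr s)" for n
    proof -
      have e: "real (Suc (Suc n)) = real (Suc n) + 1" by (simp only: of_nat_Suc add.commute)
      show ?thesis unfolding w_def e using tele_bounds(2)[of "real (Suc n)" s] s
        by (simp only: times_divide_eq_right mult.right_neutral)
    qed
  qed (rule sums_summable[OF tel], rule summable_mult[OF sz1])
  also have "\<dots> = (s-1) * (\<Sum>n. 1 / real (Suc n) powr s)" by (rule suminf_mult[OF sz1])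
  also have "\<dots> = (s-1) * zeta s" by (simp only: z1)
  finally show "1 \<le> (s-1) * zeta s" .
  have zz: "zeta s - 1 = (\<Sum>n. 1 / real (Suc (Suc n)) powr s)" using z1 z2 by linarith
  have "(s-1) * (zeta s - 1) = (s-1) * (\<Sum>n. 1 / real (Suc (Suc n)) powr s)" by (simp only: zz)
  also have "\<dots> = (\<Sum>n. (s-1) * (1 / real (Suc (Suc n)) powr s))" by (rule suminf_mult[OF sz2, symmetric])
  also have "\<dots> \<le> (\<Sum>n. w n - w (Suc n))"
  proof (rule suminf_le)
    show "(s - 1) * (1 / real (Suc (Suc n)) powr s) \<le> w n - w (Suc n)" for n
    proof -
      have e: "real (Suc (Suc n)) = real (Suc n) + 1" by (simp only: of_nat_Suc add.commute)
      show ?thesis unfolding w_def e using tele_bounds(1)[of "real (Suc n)" s] s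
        by (simp only: times_divide_eq_right mult.right_neutral)
    qed
  qed (rule summable_mult[OF sz2], rule sums_summable[OF tel])
  also have "\<dots> = 1" using tel by (simp add: sums_iff)
  finally have "(s-1) * zeta s - (s-1) \<le> 1" by (simp only: right_diff_distrib mult.right_neutral)
  thus "(s-1) * zeta s \<le> s" by linarith
qed

lemma zeta_lim: "((\<lambda>s. (s-1) * zeta s) \<longlongrightarrow> 1) (at_right 1)"
proof (rule tendsto_sandwich[where f = "\<lambda>_. 1" and h = "\<lambda>s. s"])
  show "\<forall>\<^sub>F s in at_right 1. 1 \<le> (s-1) * zeta s"
    using eventually_at_right_less[of "1::real"] by eventually_elim (use zeta_bounds in auto)
  show "\<forall>\<^sub>F s in at_right 1. (s-1) * zeta s \<le> s"
    using eventually_at_right_less[of "1::real"] by eventually_elim (use zeta_bounds in auto)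
qed auto



definition chi :: "nat \<Rightarrow> real" where
  "chi n = (if n mod 7 \<in> {1,2,4} then 1 else if n mod 7 \<in> {3,5,6} then -1 else 0)"

definition fB :: "nat \<Rightarrow> real" where
  "fB n = (if n > 0 \<and> (\<forall>p. prime p \<and> p dvd n \<longrightarrow> p mod 7 \<in> {3,5,6}) then 1 else 0)"

lemma prime7: "prime (7::nat)"
proof -
  have "m = 1 \<or> m = 7" if "m dvd 7" for m :: nat
  proof -
    have "m \<le> 7" using that by (intro dvd_imp_le) auto
    hence "m = 0 \<or> m = 1 \<or> m = 2 \<or> m = 3 \<or> m = 4 \<or> m = 5 \<or> m = 6 \<or> m = 7" by arith
    thus ?thesis using that by auto
  qed
  thus ?thesis by (auto simp: prime_nat_iff)
qed

lemma lt7_cases: "(a::nat) < 7 \<Longrightarrow> a = 0 \<or> a = 1 \<or> a = 2 \<or> a = 3 \<or> a = 4 \<or> a = 5 \<or> a = 6"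
  by arith

lemma chi_mod: "chi n = chi (n mod 7)" by (simp add: chi_def)

lemma chi_mult: "chi (m * n) = chi m * chi n"
proof -
  have "chi (m * n) = chi ((m mod 7) * (n mod 7))" by (simp add: chi_def mod_mult_eq)
  moreover have "chi (a * b) = chi a * chi b" if "a < 7" "b < 7" for a b
    using lt7_cases[OF that(1)] lt7_cases[OF that(2)] by (elim disjE; simp add: chi_def)
  ultimately show ?thesis by (simp add: chi_mod[of m] chi_mod[of n])
qed

lemma fB_mult: "m > 0 \<Longrightarrow> n > 0 \<Longrightarrow> fB (m * n) = fB m * fB n"
  unfolding fB_def by (auto simp: prime_dvd_mult_iff)

lemma test_sum:
  fixes g :: "nat \<Rightarrow> real" and k :: nat
  shows "(\<Sum>n\<in>{k*7..<k*7+7}. g n) = (\<Sum>j<7. g (k*7+j))"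
proof -
  have "(\<Sum>n\<in>{k*7..<k*7+7}. g n) = (\<Sum>j\<in>{0..<7}. g (j + k*7))"
    using sum.shift_bounds_nat_ivl[of g 0 "k*7" 7] by (simp add: add.commute)
  thus ?thesis by (simp add: atLeast0LessThan add.commute)
qed


lemma sum7: fixes h :: "nat \<Rightarrow> real" shows "(\<Sum>j<7. h j) = h 0 + h 1 + h 2 + h 3 + h 4 + h 5 + h 6"
  by (simp add: eval_nat_numeral)

lemma chi_vals: "chi 0 = 0" "chi 1 = 1" "chi 2 = 1" "chi 3 = -1" "chi 4 = 1" "chi 5 = -1" "chi 6 = -1"
  by (simp_all add: chi_def)

lemma chi_abs: "\<bar>chi n\<bar> \<le> 1" by (simp add: chi_def)

definition Lf :: "real \<Rightarrow> real" where "Lf s = (\<Sum>n. chi n / real n powr s)"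
definition Bf :: "real \<Rightarrow> real" where "Bf t = (\<Sum>n. fB n / real n powr t)"

lemma L_eq_G:
  assumes s: "s > 1"
  shows "Lf s = (\<Sum>k. blk s k)"
proof -
  have "(\<lambda>n. chi n / real n powr s) sums Lf s"
    unfolding Lf_def by (intro summable_sums summable_dir[OF chi_abs s])
  from sums_group[OF this, of 7]
  have "(\<lambda>k. \<Sum>n\<in>{k*7..<k*7+7}. chi n / real n powr s) sums Lf s" by simp
  moreover have "(\<Sum>n\<in>{k*7..<k*7+7}. chi n / real n powr s) = blk s k" for k
  proof -
    have c: "chi (k*7+j) / real (k*7+j) powr s = chi j / real (7*k+j) powr s" for j
      by (simp add: chi_mod[of "k*7+j"] chi_mod[of j] mult.commute)
    show ?thesis unfolding test_sum sum7 c chi_vals blk_def by simp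
  qed
  ultimately show ?thesis by (simp add: sums_iff)
qed

lemma Lf_tendsto: "(Lf \<longlongrightarrow> pi / sqrt 7) (at_right 1)"
proof -
  have "\<forall>\<^sub>F s in at_right 1. (\<Sum>k. blk s k) = Lf s"
    using eventually_at_right_less[of "1::real"] by eventually_elim (simp add: L_eq_G)
  from tendsto_cong[OF this] G_tendsto show ?thesis by simp
qed

lemma fB_abs: "\<bar>fB n\<bar> \<le> 1" by (simp add: fB_def)

lemma Bf_cont: "isCont Bf 2"
proof -
  have "continuous_on {3/2..3} Bf"
    unfolding Bf_def[abs_def]
  proof (rule cont_series[where M = "\<lambda>n. 1 / real n powr (3/2)"])
    show "summable (\<lambda>n. 1 / real n powr (3/2))" by (rule summable_inv_powr) simp
    show "\<bar>fB n / real n powr t\<bar> \<le> 1 / real n powr (3/2)" if "t \<in> {3/2..3}" for n t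
    proof (cases "n = 0")
      case False
      have "\<bar>fB n / real n powr t\<bar> \<le> 1 / real n powr t" by (rule abs_dir_le[OF fB_abs])
      also have "\<dots> \<le> 1 / real n powr (3/2)"
        using False that by (intro divide_left_mono powr_mono mult_pos_pos) auto
      finally show ?thesis .
    qed simp
    show "continuous_on {3/2..3} (\<lambda>t. fB n / real n powr t)" for n
      by (cases "n = 0") (auto intro!: continuous_intros)
  qed
  thus ?thesis by (rule continuous_on_interior) simp
qed

lemma eul_one: "s > 1 \<Longrightarrow> eul (\<lambda>_. 1) s" by unfold_locales auto
lemma eul_chi: "s > 1 \<Longrightarrow> eul chi s"
  by unfold_locales (auto simp: chi_mult chi_abs, simp add: chi_def)
lemma eul_fB: "s > 1 \<Longrightarrow> eul fB s"
  by unfold_locales (auto simp: fB_mult fB_abs, auto simp: fB_def)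



lemma prime_powr_gt1: "prime p \<Longrightarrow> s > 0 \<Longrightarrow> real p powr s > 1"
proof -
  assume p: "prime p" and s: "s > 0"
  have "real p > 1" using prime_gt_1_nat[OF p] by simp
  hence "1 powr s < real p powr s" using s by (intro powr_less_mono2) auto
  thus ?thesis by simp
qed

lemma fB7: "fB 7 = 0"
proof -
  have "\<not> (\<forall>p. prime p \<and> p dvd 7 \<longrightarrow> p mod 7 \<in> {3,5,6::nat})"
  proof
    assume "\<forall>p. prime p \<and> p dvd 7 \<longrightarrow> p mod 7 \<in> {3,5,6::nat}"
    hence "prime (7::nat) \<and> (7::nat) dvd 7 \<longrightarrow> (7::nat) mod 7 \<in> {3,5,6}" by (rule spec)
    thus False using prime7 by simp
  qed
  thus ?thesis unfolding fB_def by simp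
qed

lemma alg_qr: "P > 1 \<Longrightarrow> inverse ((1 - 1 / P)^2) = inverse (1 - 1 / P) * inverse (1 - 1 / P) * 1 / inverse (1 - 0 / Q)"
  for P Q :: real by (simp add: power2_eq_square)

lemma alg_nr: "P > 1 \<Longrightarrow> 1 = inverse (1 - 1 / P) * inverse (1 - -1 / P) * 1 / inverse (1 - 1 / (P * P))"
  for P :: real
proof -
  assume P: "P > 1"
  have PP: "P * P > 1 * 1" using P by (intro mult_strict_mono) auto
  have c: "1 - 1/(P*P) \<noteq> 0" using PP by (auto simp: field_simps)
  have ab: "(1 - 1 / P) * (1 - -1 / P) = 1 - 1/(P*P)" using P by (simp add: field_simps)
  have "inverse (1 - 1 / P) * inverse (1 - -1 / P) * 1 / inverse (1 - 1 / (P * P))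
      = inverse ((1 - 1 / P) * (1 - -1 / P)) * (1 - 1 / (P * P))"
    by (simp only: inverse_mult_distrib divide_inverse inverse_inverse_eq mult_1_right)
  also have "\<dots> = 1" unfolding ab by (rule left_inverse[OF c])
  finally show ?thesis by (rule sym)
qed

lemma alg_7: "P > 1 \<Longrightarrow> 1 = inverse (1 - 1 / P) * inverse (1 - 0 / P) * (1 - 1 / P) / inverse (1 - 0 / Q)"
  for P Q :: real
proof -
  assume P: "P > 1"
  have "1 - 1 / P \<noteq> 0" using P by (auto simp: field_simps)
  thus ?thesis by simp
qed

lemma pw:
  assumes s: "s > 0"
  shows "(if prime p \<and> p mod 7 \<in> {1, 2, 4} then inverse ((1 - 1 / (real p powr s))^2) else 1) =
    (if prime p then inverse (1 - 1 / real p powr s) else 1) *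
    (if prime p then inverse (1 - chi p / real p powr s) else 1) *
    (if p = 7 then 1 - 1 / real 7 powr s else 1) /
    (if prime p then inverse (1 - fB p / real p powr (2 * s)) else 1)"
proof (cases "prime p")
  case False
  hence "p \<noteq> 7" using prime7 by auto
  thus ?thesis using False by simp
next
  case True
  define P where "P = real p powr s"
  have P1: "P > 1" unfolding P_def using prime_powr_gt1[OF True s] .
  have ss: "2 * s = s + s" by simp
  have P2: "real p powr (2 * s) = P * P" unfolding P_def ss by (rule powr_add)
  have "p mod 7 < 7" by simp
  from lt7_cases[OF this] consider "p mod 7 = 0" | "p mod 7 \<in> {1,2,4}" | "p mod 7 \<in> {3,5,6}" by auto
  thus ?thesis
  proof cases
    case 1
    hence "7 dvd p" by auto
    hence p7: "p = 7" using primes_dvd_imp_eq[OF prime7 True] by simp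
    have c: "chi p = 0" unfolding p7 by (simp add: chi_def)
    have f: "fB p = 0" unfolding p7 by (rule fB7)
    have n: "\<not> (p mod 7 \<in> {1,2,4})" using 1 by simp
    have alg: "1 = inverse (1 - 1 / P) * inverse (1 - 0 / P) * (1 - 1 / P) / inverse (1 - 0 / (P * P))"
      by (rule alg_7[OF P1])
    have P7: "real 7 powr s = P" unfolding P_def p7 by simp
    show ?thesis using alg P7 True n unfolding c f P2 P_def[symmetric] by (simp only: simp_thms if_True if_False p7 P7)
  next
    case 2
    hence np7: "p \<noteq> 7" by auto
    have c: "chi p = 1" using 2 by (simp add: chi_def)
    have f: "fB p = 0"
    proof -
      have "\<not> (\<forall>q. prime q \<and> q dvd p \<longrightarrow> q mod 7 \<in> {3,5,6::nat})"
      proof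
        assume "\<forall>q. prime q \<and> q dvd p \<longrightarrow> q mod 7 \<in> {3,5,6::nat}"
        hence "prime p \<and> p dvd p \<longrightarrow> p mod 7 \<in> {3,5,6::nat}" by (rule spec)
        thus False using True 2 by auto
      qed
      thus ?thesis unfolding fB_def by simp
    qed
    have "inverse ((1 - 1 / P)^2) = inverse (1 - 1 / P) * inverse (1 - 1 / P) * 1 / inverse (1 - 0 / (P * P))"
      by (rule alg_qr[OF P1])
    thus ?thesis using True 2 np7 unfolding c f P2 P_def[symmetric] by (simp only: simp_thms if_True if_False)
  next
    case 3
    hence np7: "p \<noteq> 7" by auto
    have c: "chi p = -1" using 3 by (auto simp: chi_def)
    have f: "fB p = 1"
    proof -
      have "\<forall>q. prime q \<and> q dvd p \<longrightarrow> q mod 7 \<in> {3,5,6::nat}"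
      proof (intro allI impI)
        fix q assume "prime q \<and> q dvd p"
        hence "q = p" using primes_dvd_imp_eq[of q p] True by auto
        thus "q mod 7 \<in> {3,5,6}" using 3 by simp
      qed
      thus ?thesis unfolding fB_def using prime_gt_0_nat[OF True] by simp
    qed
    have n: "\<not> (p mod 7 \<in> {1,2,4})" using 3 by auto
    have "1 = inverse (1 - 1 / P) * inverse (1 - -1 / P) * 1 / inverse (1 - 1 / (P * P))"
      by (rule alg_nr[OF P1])
    thus ?thesis using True n np7 unfolding c f P2 P_def[symmetric] by (simp only: simp_thms if_True if_False)
  qed
qed

lemma pw2:
  "(if prime p \<and> p mod 7 \<in> {1, 2, 4} then inverse (1 - 1 / (real p)^2) else 1) =
    (if prime p then inverse (1 - 1 / real p powr 2) else 1) *
    (if p = 7 then 1 - 1 / real 7 powr 2 else 1) /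
    (if prime p then inverse (1 - fB p / real p powr 2) else 1)"
proof (cases "prime p")
  case False
  hence "p \<noteq> 7" using prime7 by auto
  thus ?thesis using False by simp
next
  case True
  define P where "P = real p ^ 2"
  have "real p > 1" using prime_gt_1_nat[OF True] by simp
  hence P1: "P > 1" unfolding P_def by (intro one_less_power) auto
  have pp: "real p powr 2 = P" unfolding P_def by simp
  have "p mod 7 < 7" by simp
  from lt7_cases[OF this] consider "p mod 7 = 0" | "p mod 7 \<in> {1,2,4}" | "p mod 7 \<in> {3,5,6}" by auto
  thus ?thesis
  proof cases
    case 1
    hence "7 dvd p" by auto
    hence p7: "p = 7" using primes_dvd_imp_eq[OF prime7 True] by simp
    have f: "fB p = 0" unfolding p7 by (rule fB7)
    have n: "\<not> (p mod 7 \<in> {1,2,4})" using 1 by simp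
    have ne: "1 - 1 / P \<noteq> 0" using P1 by (auto simp: field_simps)
    have alg: "1 = inverse (1 - 1 / P) * (1 - 1 / P) / inverse (1 - 0 / P)" using ne by simp
    have P7: "real 7 powr 2 = P" unfolding P_def p7 by simp
    show ?thesis using alg P7 True n unfolding f pp P_def[symmetric] by (simp only: simp_thms if_True if_False p7 P7)
  next
    case 2
    hence np7: "p \<noteq> 7" by auto
    have f: "fB p = 0"
    proof -
      have "\<not> (\<forall>q. prime q \<and> q dvd p \<longrightarrow> q mod 7 \<in> {3,5,6::nat})"
      proof
        assume "\<forall>q. prime q \<and> q dvd p \<longrightarrow> q mod 7 \<in> {3,5,6::nat}"
        hence "prime p \<and> p dvd p \<longrightarrow> p mod 7 \<in> {3,5,6::nat}" by (rule spec)
        thus False using True 2 by auto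
      qed
      thus ?thesis unfolding fB_def by simp
    qed
    have "inverse (1 - 1 / P) = inverse (1 - 1 / P) * 1 / inverse (1 - 0 / P)" by simp
    thus ?thesis using True 2 np7 unfolding f pp P_def[symmetric] by (simp only: simp_thms if_True if_False)
  next
    case 3
    hence np7: "p \<noteq> 7" by auto
    have f: "fB p = 1"
    proof -
      have "\<forall>q. prime q \<and> q dvd p \<longrightarrow> q mod 7 \<in> {3,5,6::nat}"
      proof (intro allI impI)
        fix q assume "prime q \<and> q dvd p"
        hence "q = p" using primes_dvd_imp_eq[of q p] True by auto
        thus "q mod 7 \<in> {3,5,6}" using 3 by simp
      qed
      thus ?thesis unfolding fB_def using prime_gt_0_nat[OF True] by simp
    qed
    have n: "\<not> (p mod 7 \<in> {1,2,4})" using 3 by auto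
    have ne: "1 - 1 / P \<noteq> 0" using P1 by (auto simp: field_simps)
    have "1 = inverse (1 - 1 / P) * 1 / inverse (1 - 1 / P)" using ne by simp
    thus ?thesis using True n np7 unfolding f pp P_def[symmetric] by (simp only: simp_thms if_True if_False)
  qed
qed



lemma zeta2: "zeta 2 = pi^2 / 6"
proof -
  have "(\<lambda>n. 1 / real (Suc n) ^ 2) sums (pi^2 / 6)"
    using inverse_squares_sums by (simp add: add.commute)
  hence "(\<lambda>n. 1 / real n ^ 2) sums (pi^2 / 6 + 1 / real 0 ^ 2)"
    by (subst sums_Suc_iff[symmetric]) simp
  hence "(\<lambda>n. 1 / real n ^ 2) sums (pi^2 / 6)" by simp
  thus ?thesis unfolding zeta_def by (simp add: sums_iff)
qed

lemma LHS_prod: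
  assumes s: "s > 1"
  shows "(\<lambda>p. if prime p \<and> p mod 7 \<in> {1, 2, 4} then inverse ((1 - 1 / (real p powr s))^2) else 1)
          has_prod (zeta s * Lf s * (1 - 1 / real 7 powr s) / Bf (2 * s))"
proof -
  have s2: "2 * s > 1" using s by simp
  note h1 = eul.euler[OF eul_one[OF s]]
  note h2 = eul.euler[OF eul_chi[OF s]]
  note h3 = has_prod_single[where f = "\<lambda>_. 1 - 1 / real 7 powr s" and i = 7]
  note h4 = eul.euler[OF eul_fB[OF s2]]
  have "(\<lambda>p. (if prime p then inverse (1 - 1 / real p powr s) else 1) *
    (if prime p then inverse (1 - chi p / real p powr s) else 1) *
    (if p = 7 then 1 - 1 / real 7 powr s else 1) /
    (if prime p then inverse (1 - fB p / real p powr (2 * s)) else 1)) has_prod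
    ((\<Sum>n. 1 / real n powr s) * (\<Sum>n. chi n / real n powr s) * (1 - 1 / real 7 powr s) / (\<Sum>n. fB n / real n powr (2 * s)))"
    using has_prod_divide[OF has_prod_mult[OF has_prod_mult[OF h1 h2] h3] h4] by simp
  thus ?thesis
    unfolding zeta_def[symmetric] Lf_def[symmetric] Bf_def[symmetric]
    by (subst has_prod_cong[OF pw]) (use s in auto)
qed

lemma RHS_prod:
  "(\<lambda>p. if prime p \<and> p mod 7 \<in> {1, 2, 4} then inverse (1 - 1 / (real p)^2) else 1)
          has_prod (zeta 2 * (1 - 1 / real 7 powr 2) / Bf 2)"
proof -
  have s: "(2::real) > 1" by simp
  note h1 = eul.euler[OF eul_one[OF s]]
  note h3 = has_prod_single[where f = "\<lambda>_. 1 - 1 / real 7 powr 2" and i = 7]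
  note h4 = eul.euler[OF eul_fB[OF s]]
  have "(\<lambda>p. (if prime p then inverse (1 - 1 / real p powr 2) else 1) *
    (if p = 7 then 1 - 1 / real 7 powr 2 else 1) /
    (if prime p then inverse (1 - fB p / real p powr 2) else 1)) has_prod
    ((\<Sum>n. 1 / real n powr 2) * (1 - 1 / real 7 powr 2) / (\<Sum>n. fB n / real n powr 2))"
    using has_prod_divide[OF has_prod_mult[OF h1 h3] h4] by simp
  thus ?thesis
    unfolding zeta_def[symmetric] Bf_def[symmetric]
    by (subst has_prod_cong[OF pw2])
qed

lemma Bf2_nz: "Bf 2 \<noteq> 0"
proof
  assume B0: "Bf 2 = 0"
  have s: "(2::real) > 1" by simp
  have "(\<lambda>p. if prime p then inverse (1 - fB p / real p powr 2) else 1) has_prod 0"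
    using eul.euler[OF eul_fB[OF s]] B0 by (simp add: Bf_def)
  then obtain i where i: "(if prime i then inverse (1 - fB i / real i powr 2) else 1) = 0"
    by (auto simp: has_prod_0_iff)
  hence "prime i" by (cases "prime i") auto
  with i have "inverse (1 - fB i / real i powr 2) = 0" by (simp only: if_True)
  hence eq: "1 - fB i / real i powr 2 = 0" by (rule inverse_zero_imp_zero)
  from eul.fac_nz[OF eul_fB[OF s] \<open>prime i\<close>] eq show False by (simp only:)
qed



theorem mainTheorem8:
  shows "((\<lambda>s::real. (s - 1) *
            (\<Prod>p. if prime p \<and> p mod 7 \<in> {1, 2, 4}
                   then inverse ((1 - 1 / (real p powr s))^2) else 1))
          \<longlongrightarrow>
          3 * sqrt 7 / (4 * pi) *
            (\<Prod>p. if prime p \<and> p mod 7 \<in> {1, 2, 4}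
                   then inverse (1 - 1 / (real p)^2) else 1))
         (at_right 1)"
proof -
  have R: "(\<Prod>p. if prime p \<and> p mod 7 \<in> {1, 2, 4} then inverse (1 - 1 / (real p)^2) else 1)
      = zeta 2 * (1 - 1 / real 7 powr 2) / Bf 2"
    using has_prod_unique[OF RHS_prod] by simp
  have ev: "\<forall>\<^sub>F s in at_right 1. ((s-1) * zeta s) * Lf s * (1 - 1 / real 7 powr s) / Bf (2 * s) =
      (s - 1) * (\<Prod>p. if prime p \<and> p mod 7 \<in> {1, 2, 4} then inverse ((1 - 1 / (real p powr s))^2) else 1)"
    using eventually_at_right_less[of "1::real"]
  proof eventually_elim
    case (elim s)
    note e = has_prod_unique[OF LHS_prod[OF elim], symmetric]
    show ?case unfolding e by (simp only: mult.assoc times_divide_eq_right)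
  qed
  have lim2: "((\<lambda>s. Bf (2 * s)) \<longlongrightarrow> Bf 2) (at_right 1)"
  proof -
    have "((\<lambda>s::real. 2 * s) \<longlongrightarrow> 2 * 1) (at_right 1)" by (intro tendsto_intros)
    hence "((\<lambda>s::real. 2 * s) \<longlongrightarrow> 2) (at_right 1)" by simp
    from isCont_tendsto_compose[OF Bf_cont this] show ?thesis .
  qed
  have lim7: "((\<lambda>s::real. 1 - 1 / real 7 powr s) \<longlongrightarrow> 1 - 1 / real 7 powr 1) (at_right 1)"
    by (intro tendsto_intros) auto
  have "((\<lambda>s. ((s-1) * zeta s) * Lf s * (1 - 1 / real 7 powr s) / Bf (2 * s)) \<longlongrightarrow>
      1 * (pi / sqrt 7) * (1 - 1 / real 7 powr 1) / Bf 2) (at_right 1)"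
    by (intro tendsto_divide tendsto_mult zeta_lim Lf_tendsto lim7 lim2 Bf2_nz)
  moreover have "1 * (pi / sqrt 7) * (1 - 1 / real 7 powr 1) / Bf 2 =
      3 * sqrt 7 / (4 * pi) * (zeta 2 * (1 - 1 / real 7 powr 2) / Bf 2)"
  proof -
    have q: "sqrt 7 * sqrt 7 = (7::real)" by simp
    have p7: "real 7 powr 1 = 7" "real 7 powr 2 = 49" by simp_all
    show ?thesis unfolding zeta2 p7 using Bf2_nz pi_gt_zero q
      by (simp add: field_simps power2_eq_square)
  qed
  ultimately have "((\<lambda>s. ((s-1) * zeta s) * Lf s * (1 - 1 / real 7 powr s) / Bf (2 * s)) \<longlongrightarrow>
      3 * sqrt 7 / (4 * pi) * (zeta 2 * (1 - 1 / real 7 powr 2) / Bf 2)) (at_right 1)" by simp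
  thus ?thesis unfolding R using tendsto_cong[OF ev] by simp
qed


end
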